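(* Let $\mathcal S=\{(\alpha_1,\dots,\alpha_6)\in\Sigma:\ \alpha_6=0\}$, regarded as a $5$-dimensional submanifold with coordinates $(\alpha_1,\dots,\alpha_5)$; it is invariant under the action of $I(\mathbb{R}^2_1)$. Provided $I(\mathbb{R}^2_1)$ acts on $\mathcal S$ with three-dimensional orbits, any algebraic $I(\mathbb{R}^2_1)$-invariant $I$ of $\mathcal S$ can be (locally) uniquely expressed as an analytic function $I=F(\mathcal I'_1,\mathcal I'_2)$, where $$\mathcal I'_1=\alpha_4^2-\alpha_5^2,\qquad \mathcal I'_2=2\alpha_3\alpha_4\alpha_5-\alpha_2\alpha_4^2-\alpha_1\alpha_5^2 .$$
   Context: The Minkowski plane $\mathbb{R}^2_1$ has pseudo-Cartesian coordinates $(t,x)$ and metric $dt^2-dx^2$. Every Killing $2$-tensor (symmetric contravariant $2$-tensor $\mathbf K$ with vanishing Schouten bracket $[\mathbf K,\mathbf g]=0$) of $\mathbb{R}^2_1$ has components $K^{tt}=\alpha_1+2\alpha_4x+\alpha_6x^2$, $K^{tx}=K^{xt}=\alpha_3+\alpha_4t+\alpha_5x+\alpha_6tx$, $K^{xx}=\alpha_2+2\alpha_5t+\alpha_6t^2$ for unique constants, identifying the space of such tensors with the parameter space $\Sigma\cong\mathbb{R}^6$. The isometry group $I(\mathbb{R}^2_1)$ (parametrized by $(\phi,a,b)$) acts on $\mathbb{R}^2_1$ by $\tilde t=t\cosh\phi+x\sinh\phi+a$, $\tilde x=t\sinh\phi+x\cosh\phi+b$, and on $\Sigma$ by $\tilde\alpha_1=\alpha_1\cosh^2\phi+2\alpha_3\cosh\phi\sinh\phi+\alpha_2\sinh^2\phi+\alpha_6b^2-2(\alpha_4\cosh\phi+\alpha_5\sinh\phi)b$,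 $\tilde\alpha_2=\alpha_1\sinh^2\phi+2\alpha_3\cosh\phi\sinh\phi+\alpha_2\cosh^2\phi+\alpha_6a^2-2(\alpha_5\cosh\phi+\alpha_4\sinh\phi)a$, $\tilde\alpha_3=\alpha_3(\cosh^2\phi+\sinh^2\phi)+(\alpha_1+\alpha_2)\cosh\phi\sinh\phi-(a\alpha_4+b\alpha_5)\cosh\phi-(a\alpha_5+b\alpha_4)\sinh\phi+\alpha_6ab$, $\tilde\alpha_4=\alpha_4\cosh\phi+\alpha_5\sinh\phi-\alpha_6b$, $\tilde\alpha_5=\alpha_4\sinh\phi+\alpha_5\cosh\phi-\alpha_6a$, $\tilde\alpha_6=\alpha_6$. An $I(\mathbb{R}^2_1)$-invariant of $\mathcal S$ is a smooth function $F$ on (a subset of) $\mathcal S$ with $F(\alpha)=F(\tilde\alpha)$ for all group elements. *)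

theory Defs
  imports "HOL-Analysis.Analysis"
begin

text \<open>Points of the invariant submanifold S = {alpha in Sigma : alpha6 = 0} of the parameter
space of Killing 2-tensors of the Minkowski plane, with coordinates
(alpha1,...,alpha5), are represented as vectors of type real^5 (component i = alpha_i).\<close>

text \<open>Action of the isometry group element (phi,a,b) on S (the given formulas with alpha6 = 0).\<close>
definition act :: "real \<Rightarrow> real \<Rightarrow> real \<Rightarrow> real^5 \<Rightarrow> real^5" where
  "act \<phi> a b \<alpha> = (\<chi> i.
     if i = 1 then \<alpha>$1 * cosh \<phi> ^ 2 + 2 * \<alpha>$3 * cosh \<phi> * sinh \<phi> + \<alpha>$2 * sinh \<phi> ^ 2
                   - 2 * (\<alpha>$4 * cosh \<phi> + \<alpha>$5 * sinh \<phi>) * b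
     else if i = 2 then \<alpha>$1 * sinh \<phi> ^ 2 + 2 * \<alpha>$3 * cosh \<phi> * sinh \<phi> + \<alpha>$2 * cosh \<phi> ^ 2
                   - 2 * (\<alpha>$5 * cosh \<phi> + \<alpha>$4 * sinh \<phi>) * a
     else if i = 3 then \<alpha>$3 * (cosh \<phi> ^ 2 + sinh \<phi> ^ 2) + (\<alpha>$1 + \<alpha>$2) * cosh \<phi> * sinh \<phi>
                   - (a * \<alpha>$4 + b * \<alpha>$5) * cosh \<phi> - (a * \<alpha>$5 + b * \<alpha>$4) * sinh \<phi>
     else if i = 4 then \<alpha>$4 * cosh \<phi> + \<alpha>$5 * sinh \<phi>
     else \<alpha>$4 * sinh \<phi> + \<alpha>$5 * cosh \<phi>)"

definition orbit_dim :: "real^5 \<Rightarrow> nat" where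
  "orbit_dim \<alpha> = (THE n. \<exists>D. ((\<lambda>(g::real \<times> real \<times> real). act (fst g) (fst (snd g)) (snd (snd g)) \<alpha>)
                               has_derivative D) (at (0,0,0)) \<and> n = dim (range D))"

definition is_invariant :: "(real^5 \<Rightarrow> real) \<Rightarrow> bool" where
  "is_invariant I \<longleftrightarrow> (\<forall>\<phi> a b \<alpha>. I (act \<phi> a b \<alpha>) = I \<alpha>)"

inductive poly_fun :: "(real^5 \<Rightarrow> real) \<Rightarrow> bool" where
  const: "poly_fun (\<lambda>_. c)"
| coord: "poly_fun (\<lambda>x. x $ i)"
| add: "poly_fun f \<Longrightarrow> poly_fun g \<Longrightarrow> poly_fun (\<lambda>x. f x + g x)"
| mult: "poly_fun f \<Longrightarrow> poly_fun g \<Longrightarrow> poly_fun (\<lambda>x. f x * g x)"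

definition real_analytic_on2 :: "(real \<times> real \<Rightarrow> real) \<Rightarrow> (real \<times> real) set \<Rightarrow> bool" where
  "real_analytic_on2 F W \<longleftrightarrow>
     (\<forall>w\<in>W. \<exists>r>0. \<exists>c :: nat \<Rightarrow> nat \<Rightarrow> real. \<forall>z\<in>ball w r.
        ((\<lambda>(i,j). c i j * (fst z - fst w) ^ i * (snd z - snd w) ^ j) has_sum F z) UNIV)"

definition inv1 :: "real^5 \<Rightarrow> real" where
  "inv1 \<alpha> = \<alpha>$4 ^ 2 - \<alpha>$5 ^ 2"

definition inv2 :: "real^5 \<Rightarrow> real" where
  "inv2 \<alpha> = 2 * \<alpha>$3 * \<alpha>$4 * \<alpha>$5 - \<alpha>$2 * \<alpha>$4 ^ 2 - \<alpha>$1 * \<alpha>$5 ^ 2"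

end

theory Submission imports Defs begin

lemma exhaust_5:
  fixes x :: 5
  shows "x = 1 \<or> x = 2 \<or> x = 3 \<or> x = 4 \<or> x = 5"
proof (induct x)
  case (of_int z)
  then have "z = 0 \<or> z = 1 \<or> z = 2 \<or> z = 3 \<or> z = 4" by fastforce
  then show ?case by auto
qed

lemma forall_5: "(\<forall>i::5. P i) \<longleftrightarrow> P 1 \<and> P 2 \<and> P 3 \<and> P 4 \<and> P 5"
  by (metis exhaust_5)

lemma act_nth:
  "act \<phi> a b \<alpha> $ 1 = \<alpha>$1 * cosh \<phi> ^ 2 + 2 * \<alpha>$3 * cosh \<phi> * sinh \<phi> + \<alpha>$2 * sinh \<phi> ^ 2
                   - 2 * (\<alpha>$4 * cosh \<phi> + \<alpha>$5 * sinh \<phi>) * b"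
  "act \<phi> a b \<alpha> $ 2 = \<alpha>$1 * sinh \<phi> ^ 2 + 2 * \<alpha>$3 * cosh \<phi> * sinh \<phi> + \<alpha>$2 * cosh \<phi> ^ 2
                   - 2 * (\<alpha>$5 * cosh \<phi> + \<alpha>$4 * sinh \<phi>) * a"
  "act \<phi> a b \<alpha> $ 3 = \<alpha>$3 * (cosh \<phi> ^ 2 + sinh \<phi> ^ 2) + (\<alpha>$1 + \<alpha>$2) * cosh \<phi> * sinh \<phi>
                   - (a * \<alpha>$4 + b * \<alpha>$5) * cosh \<phi> - (a * \<alpha>$5 + b * \<alpha>$4) * sinh \<phi>"
  "act \<phi> a b \<alpha> $ 4 = \<alpha>$4 * cosh \<phi> + \<alpha>$5 * sinh \<phi>"
  "act \<phi> a b \<alpha> $ 5 = \<alpha>$4 * sinh \<phi> + \<alpha>$5 * cosh \<phi>"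
  by (simp_all add: act_def)

lemma boost_inv1: "inv1 (act \<phi> 0 0 \<alpha>) = inv1 \<alpha>"
proof -
  have h: "cosh \<phi> ^ 2 = 1 + sinh \<phi> ^ 2" by (simp add: cosh_square_eq)
  have "inv1 (act \<phi> 0 0 \<alpha>) = (cosh \<phi>^2 - sinh \<phi>^2) * inv1 \<alpha>"
    unfolding inv1_def act_nth by algebra
  then show ?thesis using h by simp
qed

lemma boost_inv2: "inv2 (act \<phi> 0 0 \<alpha>) = inv2 \<alpha>"
proof -
  have h: "cosh \<phi> ^ 2 = 1 + sinh \<phi> ^ 2" by (simp add: cosh_square_eq)
  define c where "c = cosh \<phi>"
  define s where "s = sinh \<phi>"
  have h': "c^2 = 1 + s^2" using h c_def s_def by simp
  have "inv2 (act \<phi> 0 0 \<alpha>) = 2 * (\<alpha>$3 * (c^2 + s^2) + (\<alpha>$1 + \<alpha>$2) * c * s) * (\<alpha>$4 * c + \<alpha>$5 * s) * (\<alpha>$4 * s + \<alpha>$5 * c)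
     - (\<alpha>$1 * s^2 + 2 * \<alpha>$3 * c * s + \<alpha>$2 * c^2) * (\<alpha>$4 * c + \<alpha>$5 * s)^2
     - (\<alpha>$1 * c^2 + 2 * \<alpha>$3 * c * s + \<alpha>$2 * s^2) * (\<alpha>$4 * s + \<alpha>$5 * c)^2"
    unfolding inv2_def act_nth c_def s_def by simp
  also have "\<dots> = (c^2 - s^2)^2 * inv2 \<alpha>" unfolding inv2_def by algebra
  also have "\<dots> = inv2 \<alpha>" using h' by simp
  finally show ?thesis .
qed


lemma trans1:
  fixes xa xb xc xd xe :: real
  assumes u: "xd + xe \<noteq> 0"
  defines "k \<equiv> (2*xc*xd*xe - xb*xd^2 - xa*xe^2)/(xd+xe)^2"
  shows "\<exists>a b. xa - 2*xd*b = -k \<and> xb - 2*xe*a = -k \<and> xc - (a*xd + b*xe) = k"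
proof (cases "xd = xe")
  case True
  have xd: "xd \<noteq> 0" using u True by auto
  show ?thesis
  proof (intro exI conjI)
    show "xa - 2*xd*((xa+k)/(2*xd)) = -k" using xd by (simp add: field_simps)
    show "xb - 2*xe*((xb+k)/(2*xd)) = -k" using xd True by (simp add: field_simps)
    show "xc - ((xb+k)/(2*xd)*xd + (xa+k)/(2*xd)*xe) = k"
      using xd True unfolding k_def by (simp add: field_simps power2_eq_square; (algebra)?)
  qed
next
  case False
  define u where "u = xd + xe"
  define v where "v = xd - xe"
  have v: "v \<noteq> 0" using False v_def by auto
  define pp where "pp = (xa+xb+2*xc)/(2*u)"
  define qq where "qq = (2*xc - 4*k - (xa + xb))/(2 * v)"
  have xd: "xd = (u+v)/2" and xe: "xe = (u-v)/2" using u_def v_def by auto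
  have k: "k = (2*xc*xd*xe - xb*xd^2 - xa*xe^2)/u^2" using k_def u_def by simp
  show ?thesis
  proof (intro exI conjI)
    show "xa - 2*xd*((pp-qq)/2) = -k" using u v unfolding pp_def qq_def k xd xe u_def[symmetric]
      by (simp add: field_simps power2_eq_square; (algebra)?)
    show "xb - 2*xe*((pp+qq)/2) = -k" using u v unfolding pp_def qq_def k xd xe u_def[symmetric]
      by (simp add: field_simps power2_eq_square; (algebra)?)
    show "xc - ((pp+qq)/2*xd + (pp-qq)/2*xe) = k" using u v unfolding pp_def qq_def k xd xe u_def[symmetric]
      by (simp add: field_simps power2_eq_square; (algebra)?)
  qed
qed


definition mono_eval :: "real \<times> real \<Rightarrow> real \<times> nat \<times> nat \<Rightarrow> real" where
  "mono_eval d m = (case m of (k,i,j) \<Rightarrow> k * fst d ^ i * snd d ^ j)"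

definition lrep :: "(real \<times> real \<Rightarrow> real) \<Rightarrow> bool" where
  "lrep F \<longleftrightarrow> (\<forall>w. \<exists>L. \<forall>z. F z = sum_list (map (mono_eval (fst z - fst w, snd z - snd w)) L))"

definition prodL :: "(real \<times> nat \<times> nat) list \<Rightarrow> (real \<times> nat \<times> nat) list \<Rightarrow> (real \<times> nat \<times> nat) list" where
  "prodL L1 L2 = concat (map (\<lambda>(k,i,j). map (\<lambda>(k',i',j'). (k*k',i+i',j+j')) L2) L1)"

lemma sum_list_prodL1:
  "sum_list (map (mono_eval d) (map (\<lambda>(k',i',j'). (k*k',i+i',j+j')) L2))
     = mono_eval d (k,i,j) * sum_list (map (mono_eval d) L2)"
  by (induction L2) (auto simp: mono_eval_def power_add algebra_simps)

lemma sum_list_prodL: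
  "sum_list (map (mono_eval d) (prodL L1 L2))
     = sum_list (map (mono_eval d) L1) * sum_list (map (mono_eval d) L2)"
proof (induction L1)
  case Nil
  then show ?case by (simp add: prodL_def)
next
  case (Cons m L1)
  obtain k i j where m: "m = (k,i,j)" by (cases m) auto
  have "prodL (m # L1) L2 = map (\<lambda>(k',i',j'). (k*k',i+i',j+j')) L2 @ prodL L1 L2"
    by (simp add: prodL_def m)
  then have "sum_list (map (mono_eval d) (prodL (m # L1) L2)) = mono_eval d (k,i,j) * sum_list (map (mono_eval d) L2)
     + sum_list (map (mono_eval d) L1) * sum_list (map (mono_eval d) L2)"
    by (simp only: sum_list_append map_append sum_list_prodL1 Cons.IH)
  then show ?case by (simp add: m distrib_right)
qed

lemma poly_lrep:
  assumes "poly_fun f"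
  shows "lrep (\<lambda>z. f (A + fst z *\<^sub>R B + snd z *\<^sub>R C))"
  using assms
proof (induction f)
  case (const c)
  show ?case unfolding lrep_def
    by (intro allI exI[of _ "[(c,0,0)]"]) (simp add: mono_eval_def)
next
  case (coord i)
  show ?case unfolding lrep_def
  proof
    fix w :: "real \<times> real"
    show "\<exists>L. \<forall>z. (A + fst z *\<^sub>R B + snd z *\<^sub>R C) $ i =
            sum_list (map (mono_eval (fst z - fst w, snd z - snd w)) L)"
      by (intro exI[of _ "[(A$i + fst w * B$i + snd w * C$i,0,0),(B$i,1,0),(C$i,0,1)]"] allI)
         (simp add: mono_eval_def algebra_simps)
  qed
next
  case (add f g)
  show ?case unfolding lrep_def
  proof
    fix w :: "real \<times> real"
    obtain L1 where L1: "\<forall>z. f (A + fst z *\<^sub>R B + snd z *\<^sub>R C) = sum_list (map (mono_eval (fst z - fst w, snd z - snd w)) L1)"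
      using add.IH(1) unfolding lrep_def by blast
    obtain L2 where L2: "\<forall>z. g (A + fst z *\<^sub>R B + snd z *\<^sub>R C) = sum_list (map (mono_eval (fst z - fst w, snd z - snd w)) L2)"
      using add.IH(2) unfolding lrep_def by blast
    show "\<exists>L. \<forall>z. f (A + fst z *\<^sub>R B + snd z *\<^sub>R C) + g (A + fst z *\<^sub>R B + snd z *\<^sub>R C) =
            sum_list (map (mono_eval (fst z - fst w, snd z - snd w)) L)"
      by (rule exI[of _ "L1 @ L2"]) (simp add: L1 L2)
  qed
next
  case (mult f g)
  show ?case unfolding lrep_def
  proof
    fix w :: "real \<times> real"
    obtain L1 where L1: "\<forall>z. f (A + fst z *\<^sub>R B + snd z *\<^sub>R C) = sum_list (map (mono_eval (fst z - fst w, snd z - snd w)) L1)"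
      using mult.IH(1) unfolding lrep_def by blast
    obtain L2 where L2: "\<forall>z. g (A + fst z *\<^sub>R B + snd z *\<^sub>R C) = sum_list (map (mono_eval (fst z - fst w, snd z - snd w)) L2)"
      using mult.IH(2) unfolding lrep_def by blast
    show "\<exists>L. \<forall>z. f (A + fst z *\<^sub>R B + snd z *\<^sub>R C) * g (A + fst z *\<^sub>R B + snd z *\<^sub>R C) =
            sum_list (map (mono_eval (fst z - fst w, snd z - snd w)) L)"
      by (rule exI[of _ "prodL L1 L2"]) (simp add: L1 L2 sum_list_prodL)
  qed
qed

definition coefL :: "(real \<times> nat \<times> nat) list \<Rightarrow> nat \<Rightarrow> nat \<Rightarrow> real" where
  "coefL L i j = sum_list (map (\<lambda>(k,a,b). if a = i \<and> b = j then k else 0) L)"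

lemma coefL_has_sum:
  "((\<lambda>(i,j). coefL L i j * X ^ i * Y ^ j) has_sum sum_list (map (mono_eval (X,Y)) L)) UNIV"
proof (induction L)
  case Nil
  then show ?case by (simp add: coefL_def)
next
  case (Cons m L)
  obtain k a b where m: "m = (k,a,b)" by (cases m) auto
  have single: "((\<lambda>(i,j). (if a = i \<and> b = j then k else 0) * X ^ i * Y ^ j) has_sum mono_eval (X,Y) m) UNIV"
    by (rule has_sum_finite_neutralI[of "{(a,b)}"]) (auto simp: m mono_eval_def split: if_splits)
  have "((\<lambda>x. (\<lambda>(i,j). (if a = i \<and> b = j then k else 0) * X ^ i * Y ^ j) x + (\<lambda>(i,j). coefL L i j * X ^ i * Y ^ j) x)
      has_sum (mono_eval (X,Y) m + sum_list (map (mono_eval (X,Y)) L))) UNIV"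
    by (rule has_sum_add[OF single Cons.IH])
  moreover have "(\<lambda>x. (\<lambda>(i,j). (if a = i \<and> b = j then k else 0) * X ^ i * Y ^ j) x + (\<lambda>(i,j). coefL L i j * X ^ i * Y ^ j) x)
     = (\<lambda>(i,j). coefL (m # L) i j * X ^ i * Y ^ j)"
    by (auto simp: coefL_def m algebra_simps)
  ultimately show ?case by simp
qed

lemma lrep_analytic:
  assumes "lrep F"
  shows "real_analytic_on2 F W"
  unfolding real_analytic_on2_def
proof
  fix w assume "w \<in> W"
  obtain L where L: "\<forall>z. F z = sum_list (map (mono_eval (fst z - fst w, snd z - snd w)) L)"
    using assms unfolding lrep_def by blast
  show "\<exists>r>0. \<exists>c. \<forall>z\<in>ball w r. ((\<lambda>(i, j). c i j * (fst z - fst w) ^ i * (snd z - snd w) ^ j) has_sum F z) UNIV"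
    by (intro exI[of _ 1] conjI exI[of _ "coefL L"] ballI) (auto simp: L coefL_has_sum)
qed


lemma orbit_dim_nz:
  assumes "orbit_dim p = 3"
  shows "p$4 \<noteq> 0 \<or> p$5 \<noteq> 0"
proof (rule ccontr)
  assume "\<not> (p$4 \<noteq> 0 \<or> p$5 \<noteq> 0)"
  then have p4: "p$4 = 0" and p5: "p$5 = 0" by auto
  define V1 :: "real^5" where "V1 = (\<chi> i. if i = 1 then p$1 else if i = 2 then p$2 else if i = 3 then p$3 else 0)"
  define V2 :: "real^5" where "V2 = (\<chi> i. if i = 1 then 2*p$3 else if i = 2 then 2*p$3 else if i = 3 then p$1 + p$2 else 0)"
  define V3 :: "real^5" where "V3 = (\<chi> i. if i = 1 then p$2 else if i = 2 then p$1 else if i = 3 then p$3 else 0)"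
  define h where "h = (\<lambda>\<phi>::real. (cosh \<phi>^2) *\<^sub>R V1 + (cosh \<phi> * sinh \<phi>) *\<^sub>R V2 + (sinh \<phi>^2) *\<^sub>R V3)"
  have feq: "(\<lambda>(g::real \<times> real \<times> real). act (fst g) (fst (snd g)) (snd (snd g)) p) = (\<lambda>g. h (fst g))"
    by (rule ext) (simp add: vec_eq_iff forall_5 act_nth h_def V1_def V2_def V3_def p4 p5 algebra_simps)
  have hd: "(h has_derivative (\<lambda>x. x *\<^sub>R V2)) (at 0)"
    unfolding h_def
    by (auto intro!: derivative_eq_intros simp: fun_eq_iff algebra_simps)
  have fd: "((\<lambda>g::real \<times> real \<times> real. h (fst g)) has_derivative (\<lambda>g. fst g *\<^sub>R V2)) (at (0,0,0))"
  proof -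
    have "(fst has_derivative fst) (at ((0::real),(0::real,0::real)))"
      by (rule has_derivative_fst[OF has_derivative_ident])
    from diff_chain_at[OF this] hd show ?thesis by (simp add: o_def)
  qed
  have "orbit_dim p = dim (range (\<lambda>g::real \<times> real \<times> real. fst g *\<^sub>R V2))"
    unfolding orbit_dim_def feq
  proof (rule the_equality)
    show "\<exists>D. ((\<lambda>g::real \<times> real \<times> real. h (fst g)) has_derivative D) (at (0, 0, 0)) \<and>
        dim (range (\<lambda>g::real \<times> real \<times> real. fst g *\<^sub>R V2)) = dim (range D)"
      using fd by blast
    fix n assume "\<exists>D. ((\<lambda>g::real \<times> real \<times> real. h (fst g)) has_derivative D) (at (0, 0, 0)) \<and> n = dim (range D)"
    then obtain D where D: "((\<lambda>g::real \<times> real \<times> real. h (fst g)) has_derivative D) (at (0, 0, 0))" and n: "n = dim (range D)" by blast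
    have "D = (\<lambda>g. fst g *\<^sub>R V2)" using has_derivative_unique[OF D fd] .
    then show "n = dim (range (\<lambda>g::real \<times> real \<times> real. fst g *\<^sub>R V2))" using n by simp
  qed
  also have "\<dots> \<le> 1"
  proof -
    have "range (\<lambda>g::real \<times> real \<times> real. fst g *\<^sub>R V2) \<subseteq> span {V2}"
      by (auto simp: span_singleton)
    then have "dim (range (\<lambda>g::real \<times> real \<times> real. fst g *\<^sub>R V2)) \<le> card {V2}"
      by (intro dim_le_card) auto
    then show ?thesis by simp
  qed
  finally show False using assms by simp
qed


definition sec :: "real \<Rightarrow> real \<Rightarrow> real \<times> real \<Rightarrow> real^5" where
  "sec e w z = (\<chi> i. if i = 1 then -(snd z / w^2) else if i = 2 then -(snd z / w^2)
      else if i = 3 then e * (snd z / w^2) else if i = 4 then (w + fst z / w)/2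
      else e * (w - fst z / w)/2)"

lemma sec_nth:
  "sec e w z $ 1 = -(snd z / w^2)" "sec e w z $ 2 = -(snd z / w^2)"
  "sec e w z $ 3 = e * (snd z / w^2)" "sec e w z $ 4 = (w + fst z / w)/2"
  "sec e w z $ 5 = e * (w - fst z / w)/2"
  by (simp_all add: sec_def)

lemma sec_affine:
  "sec e w z = (\<chi> i. if i = 4 then w/2 else if i = 5 then e*w/2 else 0)
     + fst z *\<^sub>R (\<chi> i. if i = 4 then 1/(2*w) else if i = 5 then -e/(2*w) else 0)
     + snd z *\<^sub>R (\<chi> i. if i = 1 then -1/w^2 else if i = 2 then -1/w^2 else if i = 3 then e/w^2 else 0)"
  by (simp add: vec_eq_iff forall_5 sec_nth) (simp add: field_simps)

lemma sec_inv:
  assumes e: "e = 1 \<or> e = -1" and w: "w \<noteq> 0"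
  shows "inv1 (sec e w z) = fst z" "inv2 (sec e w z) = snd z"
  using e w by (auto simp: inv1_def inv2_def sec_nth field_simps power2_eq_square)

lemma sec_U:
  assumes e: "e = 1 \<or> e = -1" and w: "w \<noteq> 0"
  shows "sec e w z $ 4 + e * sec e w z $ 5 = w"
  using e w by (auto simp: sec_nth field_simps)

lemma reach:
  assumes e: "e = 1 \<or> e = -1" and w: "w \<noteq> 0" and bw: "\<beta>$4 + e * \<beta>$5 = w"
  shows "\<exists>a b. act 0 a b \<beta> = sec e w (inv1 \<beta>, inv2 \<beta>)"
  using e
proof
  assume e1: "e = 1"
  have b5: "\<beta>$5 = w - \<beta>$4" using bw e1 by simp
  obtain a b where ab: "\<beta>$1 - 2*\<beta>$4*b = -(inv2 \<beta> / w^2)" "\<beta>$2 - 2*\<beta>$5*a = -(inv2 \<beta> / w^2)"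
      "\<beta>$3 - (a*\<beta>$4 + b*\<beta>$5) = inv2 \<beta> / w^2"
    using trans1[where xa="\<beta>$1" and xb="\<beta>$2" and xc="\<beta>$3" and xd="\<beta>$4" and xe="\<beta>$5"] bw e1 w by (auto simp: inv2_def)
  have "act 0 a b \<beta> = sec e w (inv1 \<beta>, inv2 \<beta>)"
    using ab w e1 unfolding vec_eq_iff forall_5 act_nth sec_nth
    by (simp add: inv1_def b5 field_simps power2_eq_square) 
  then show ?thesis by blast
next
  assume e1: "e = -1"
  have b5: "\<beta>$5 = \<beta>$4 - w" using bw e1 by simp
  obtain a b where ab: "\<beta>$1 - 2*\<beta>$4*b = -(inv2 \<beta> / w^2)" "\<beta>$2 - 2*(-\<beta>$5)*a = -(inv2 \<beta> / w^2)"
      "(-\<beta>$3) - (a*\<beta>$4 + b*(-\<beta>$5)) = inv2 \<beta> / w^2"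
    using trans1[where xa="\<beta>$1" and xb="\<beta>$2" and xc="-\<beta>$3" and xd="\<beta>$4" and xe="-\<beta>$5"] bw e1 w by (auto simp: inv2_def)
  have "act 0 (-a) b \<beta> = sec e w (inv1 \<beta>, inv2 \<beta>)"
    using ab w e1 unfolding vec_eq_iff forall_5 act_nth sec_nth
    by (simp add: inv1_def b5 field_simps power2_eq_square) 
  then show ?thesis by blast
qed

lemma boost_reach:
  assumes e: "e = 1 \<or> e = -1" and pos: "(\<alpha>$4 + e*\<alpha>$5) * w > 0"
  shows "act (e * ln (w/(\<alpha>$4 + e*\<alpha>$5))) 0 0 \<alpha> $ 4 + e * act (e * ln (w/(\<alpha>$4 + e*\<alpha>$5))) 0 0 \<alpha> $ 5 = w"
proof -
  define L where "L = ln (w/(\<alpha>$4 + e*\<alpha>$5))"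
  have r: "w/(\<alpha>$4 + e*\<alpha>$5) > 0" using pos by (metis divide_pos_pos divide_neg_neg mult_less_0_iff zero_less_mult_iff)
  have nz: "\<alpha>$4 + e*\<alpha>$5 \<noteq> 0" using pos by auto
  have ex: "exp L = w/(\<alpha>$4 + e*\<alpha>$5)" using r L_def by simp
  have "act (e * L) 0 0 \<alpha> $ 4 + e * act (e * L) 0 0 \<alpha> $ 5 = (\<alpha>$4 + e*\<alpha>$5) * (cosh L + sinh L)"
    using e by (auto simp: act_nth algebra_simps)
  also have "\<dots> = w" using ex nz by (simp add: cosh_plus_sinh)
  finally show ?thesis by (simp add: L_def)
qed

lemma main_case:
  fixes I :: "real^5 \<Rightarrow> real" and p :: "real^5"
  assumes "poly_fun I" and inv: "is_invariant I" and e: "e = 1 \<or> e = -1" and w: "w = p$4 + e*p$5" and wnz: "w \<noteq> 0"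
  shows "\<exists>U W F. open U \<and> p \<in> U \<and> open W \<and> (\<lambda>\<alpha>. (inv1 \<alpha>, inv2 \<alpha>)) ` U = W
           \<and> real_analytic_on2 F W
           \<and> (\<forall>\<alpha>\<in>U. I \<alpha> = F (inv1 \<alpha>, inv2 \<alpha>))
           \<and> (\<forall>G. (\<forall>\<alpha>\<in>U. I \<alpha> = G (inv1 \<alpha>, inv2 \<alpha>)) \<longrightarrow> (\<forall>w\<in>W. G w = F w))"
proof -
  define U where "U = {\<alpha>::real^5. (\<alpha>$4 + e*\<alpha>$5) * w > 0}"
  define F where "F = (\<lambda>z. I (sec e w z))"
  have secU: "sec e w z \<in> U" for z
  proof -
    have "w * w > 0" using wnz by (metis not_real_square_gt_zero)
    then show ?thesis using sec_U[OF e wnz, of z] by (simp add: U_def)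
  qed
  have img: "(\<lambda>\<alpha>. (inv1 \<alpha>, inv2 \<alpha>)) ` U = UNIV"
  proof -
    have "z \<in> (\<lambda>\<alpha>. (inv1 \<alpha>, inv2 \<alpha>)) ` U" for z
      using secU[of z] sec_inv[OF e wnz, of z] by (intro image_eqI[of _ _ "sec e w z"]) auto
    then show ?thesis by auto
  qed
  have openU: "open U"
    unfolding U_def by (intro open_Collect_less continuous_intros)
  have ww: "w * w > 0" using wnz by (metis not_real_square_gt_zero)
  have pU: "p \<in> U" using ww by (simp add: U_def w[symmetric])
  have an: "real_analytic_on2 F UNIV"
    unfolding F_def sec_affine by (rule lrep_analytic[OF poly_lrep[OF assms(1)]])
  have eqF: "I \<alpha> = F (inv1 \<alpha>, inv2 \<alpha>)" if "\<alpha> \<in> U" for \<alpha>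
  proof -
    define \<beta> where "\<beta> = act (e * ln (w/(\<alpha>$4 + e*\<alpha>$5))) 0 0 \<alpha>"
    have bw: "\<beta>$4 + e * \<beta>$5 = w" unfolding \<beta>_def
      by (rule boost_reach[OF e]) (use that in \<open>simp add: U_def\<close>)
    obtain a b where ab: "act 0 a b \<beta> = sec e w (inv1 \<beta>, inv2 \<beta>)"
      using reach[OF e wnz bw] by blast
    have "I \<alpha> = I \<beta>" using inv unfolding is_invariant_def \<beta>_def by simp
    also have "\<dots> = I (act 0 a b \<beta>)" using inv unfolding is_invariant_def by simp
    also have "\<dots> = F (inv1 \<beta>, inv2 \<beta>)" by (simp add: ab F_def)
    also have "\<dots> = F (inv1 \<alpha>, inv2 \<alpha>)" by (simp add: \<beta>_def boost_inv1 boost_inv2)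
    finally show ?thesis .
  qed
  have uniq: "\<forall>G. (\<forall>\<alpha>\<in>U. I \<alpha> = G (inv1 \<alpha>, inv2 \<alpha>)) \<longrightarrow> (\<forall>z\<in>UNIV. G z = F z)"
  proof (intro allI impI ballI)
    fix G z assume H: "\<forall>\<alpha>\<in>U. I \<alpha> = G (inv1 \<alpha>, inv2 \<alpha>)"
    have "G z = G (inv1 (sec e w z), inv2 (sec e w z))" using sec_inv[OF e wnz, of z] by simp
    also have "\<dots> = I (sec e w z)" using H secU[of z] by simp
    finally show "G z = F z" by (simp add: F_def)
  qed
  show ?thesis
    by (rule exI[of _ U], rule exI[of _ UNIV], rule exI[of _ F])
       (use openU pU img an eqF uniq in auto)
qed

theorem lemma4p1:
  fixes I :: "real^5 \<Rightarrow> real" and p :: "real^5"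
  assumes "poly_fun I" and "is_invariant I" and "orbit_dim p = 3"
  shows "\<exists>U W F. open U \<and> p \<in> U \<and> open W \<and> (\<lambda>\<alpha>. (inv1 \<alpha>, inv2 \<alpha>)) ` U = W
           \<and> real_analytic_on2 F W
           \<and> (\<forall>\<alpha>\<in>U. I \<alpha> = F (inv1 \<alpha>, inv2 \<alpha>))
           \<and> (\<forall>G. (\<forall>\<alpha>\<in>U. I \<alpha> = G (inv1 \<alpha>, inv2 \<alpha>)) \<longrightarrow> (\<forall>w\<in>W. G w = F w))"
proof (cases "p$4 + p$5 = 0")
  case False
  show ?thesis using main_case[OF assms(1,2), of 1 "p$4 + 1*p$5"] False by auto
next
  case True
  have "p$4 \<noteq> 0 \<or> p$5 \<noteq> 0" using orbit_dim_nz[OF assms(3)] .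
  then have "p$4 + (-1) * p$5 \<noteq> 0" using True by auto
  then show ?thesis using main_case[OF assms(1,2), of "-1" "p$4 + (-1)*p$5"] by auto
qed

end
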